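(* For $K>\hat K^*:=\frac{b\sigma_2}{b-\mu_0}$ let $R(K)$ denote the $R$-component of the unique equilibrium $G_4(K)=(S^*,0,I_2^*,0,R^* )$ of the system below with positive $S^*,I_2^*,R^*$ (so $R(K)$ is the unique root in $(0,S^{**}-\sigma_2)$ of $\big(S^{**}-\sigma_2-R+\frac{K}{b}(\mu_0-\mu_4')\big)R+\frac{\rho_2}{\alpha_2}(S^{**}-\sigma_2-R)=0$). Then $K\mapsto R(K)$ is differentiable on $(\hat K^*,\infty)$ and $$0<K\frac{dR}{dK}<\sigma_2+R(K).$$
   Context: Consider, for $t\ge0$, the system $S'=\big(b(1-\tfrac{N}{K})-\alpha_1I_1-\alpha_2I_2-(\beta_1+\beta_2+\alpha_3)I_{12}-\mu_0\big)S$, $I_1'=\big(b(1-\tfrac{N}{K})+\alpha_1S-\eta_1I_{12}-\gamma_1I_2-\mu_1\big)I_1+\beta_1SI_{12}$, $I_2'=\big(b(1-\tfrac{N}{K})+\alpha_2S-\eta_2I_{12}-\gamma_2I_1-\mu_2\big)I_2+\beta_2SI_{12}$, $I_{12}'=\big(b(1-\tfrac{N}{K})+\alpha_3S+\eta_1I_1+\eta_2I_2-\mu_3\big)I_{12}+(\gamma_1+\gamma_2)I_1I_2$, $R'=\big(b(1-\tfrac{N}{K})-\mu_4'\big)R+\rho_1I_1+\rho_2I_2+\rho_3I_{12}$, where $N=S+I_1+I_2+I_{12}+R$. All parameters $b,K,\alpha_i,\beta_i,\gamma_i,\eta_i,\rho_i,\mu_0,\mu_i'$ are positive and $\mu_i=\rho_i+\mu_i'$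 for $i=1,2,3$; $K$ is regarded as a varying parameter, the others fixed. Standing assumptions: $b>\mu_0$, $b>\mu_i$ ($i=1,2,3$), $b>\mu_4'$, and $\mu_0<\mu_4'<\mu_j'$ for $j=1,2,3$. Set $\sigma_k=(\mu_k-\mu_0)/\alpha_k$ ($k=1,2,3$), assumed to satisfy $\sigma_1<\sigma_2<\sigma_3$, and $S^{**}=\frac{K}{b}(b-\mu_0)$. *)

theory Defs
  imports "HOL-Analysis.Analysis"
begin

definition Sstar2 :: "real \<Rightarrow> real \<Rightarrow> real \<Rightarrow> real" where
  "Sstar2 b mu0 K = K / b * (b - mu0)"

definition G4_eq :: "real \<Rightarrow> real \<Rightarrow> real \<Rightarrow> real \<Rightarrow> real \<Rightarrow> real \<Rightarrow> real \<Rightarrow> real \<Rightarrow> real" where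
  "G4_eq b mu0 mu4' rho2 alpha2 sigma2 K R =
     (Sstar2 b mu0 K - sigma2 - R + K / b * (mu0 - mu4')) * R
     + rho2 / alpha2 * (Sstar2 b mu0 K - sigma2 - R)"

definition R_G4 :: "real \<Rightarrow> real \<Rightarrow> real \<Rightarrow> real \<Rightarrow> real \<Rightarrow> real \<Rightarrow> real \<Rightarrow> real" where
  "R_G4 b mu0 mu4' rho2 alpha2 sigma2 K =
     (THE R. 0 < R \<and> R < Sstar2 b mu0 K - sigma2 \<and> G4_eq b mu0 mu4' rho2 alpha2 sigma2 K R = 0)"

end

theory Submission
  imports Defs
begin

lemma quad_root:
  fixes A c r :: real
  assumes A: "A > 0" and c: "c > 0" and r: "r > 0"
  defines "q \<equiv> A - c - r"
  defines "s \<equiv> sqrt (q^2 + 4*r*A)"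
  defines "g \<equiv> (q + s)/2"
  shows "s > 0" "s^2 = q^2 + 4*r*A" "0 < g" "g < A" "(A - g - c)*g + r*(A - g) = 0"
    "\<And>x. 0 < x \<Longrightarrow> (A - x - c)*x + r*(A - x) = 0 \<Longrightarrow> x = g"
proof -
  have d: "q^2 + 4*r*A > 0" using A r zero_le_power2[of q] mult_pos_pos[OF r A] by linarith
  show s2: "s^2 = q^2 + 4*r*A" using d unfolding s_def by (simp add: less_imp_le)
  have s0: "s \<ge> 0" unfolding s_def using d by simp
  show "s > 0" using d unfolding s_def by simp
  have "\<bar>q\<bar> < s"
  proof -
    have "q^2 < s^2" using s2 A r by simp
    thus ?thesis using s0 by (metis abs_ge_zero abs_of_nonneg power2_abs power_less_imp_less_base)
  qed
  then show "0 < g" unfolding g_def by (auto simp: abs_less_iff)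
  have "s < 2*A - q"
  proof -
    have p: "2*A - q > 0" unfolding q_def using A c r by linarith
    have e: "(2*A - q)^2 - s^2 = 4*(A*c)" unfolding s2 q_def by (simp add: power2_eq_square algebra_simps)
    have "s^2 < (2*A - q)^2" using e mult_pos_pos[OF A c] by linarith
    thus ?thesis using p s0 by (metis abs_of_nonneg less_le power2_abs power_less_imp_less_base)
  qed
  then show "g < A" unfolding g_def by (simp add: field_simps)
  have eq: "g^2 - q*g - r*A = 0"
    unfolding g_def using s2 by (simp add: power2_eq_square field_simps)
  show "(A - g - c)*g + r*(A - g) = 0" using eq unfolding q_def by (simp add: power2_eq_square algebra_simps)
  fix x assume x: "0 < x" "(A - x - c)*x + r*(A - x) = 0"
  have "(x - g) * (x - (q - s)/2) = x^2 - q*x - r*A"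
    using s2 unfolding g_def by (simp add: power2_eq_square field_simps)
  also have "\<dots> = 0" using x(2) unfolding q_def by (simp add: power2_eq_square algebra_simps)
  finally have "x = g \<or> x = (q - s)/2" by simp
  moreover have "(q - s)/2 < 0" using \<open>\<bar>q\<bar> < s\<close> by (auto simp: abs_less_iff)
  ultimately show "x = g" using x(1) by linarith
qed

lemma key_ineq:
  fixes A c r sg g sq D K al be :: real
  assumes A: "A > 0" and c: "c > 0" and r: "r > 0" and sg: "sg > 0"
    and g: "0 < g" "g < A" and eq: "(A - g - c)*g + r*(A - g) = 0"
    and sq: "sq = 2*g - (A - c - r)" "sq > 0"
    and Ds: "sq * D = (al - be)*g + r*al"
    and alK: "al*K = A + sg" and beK: "be*K = c" and pos: "A + sg - c > 0"
  shows "0 < K * D \<and> K * D < sg + g"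
proof -
  have KDs: "sq * (K*D) = (A + sg - c)*g + r*(A + sg)"
  proof -
    have "sq * (K*D) = K * (sq*D)" by simp
    also have "\<dots> = (al*K - be*K)*g + r*(al*K)" unfolding Ds by (simp add: algebra_simps)
    finally show ?thesis unfolding alK beK .
  qed
  have rhs_pos: "(A + sg - c)*g + r*(A + sg) > 0"
    using pos g r A sg by (simp add: add_pos_pos)
  have "0 < K*D" using KDs rhs_pos sq(2) by (metis zero_less_mult_pos)
  define E where "E = (sg + g)* sq - sq*(K*D)"
  have E1: "E = -sg*(A-g-c) + r*(A-g) - 2*((A-g-c)*g + r*(A-g))"
    by (simp only: E_def KDs) (simp add: sq(1) algebra_simps)
  hence E2: "g * E = sg*r*(A-g) + r*g*(A-g)"
  proof -
    have "g*E = - sg*((A-g-c)*g) + r*g*(A-g)" unfolding E1 eq by (simp add: algebra_simps)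
    also have "(A-g-c)*g = - r*(A-g)" using eq by linarith
    finally show ?thesis by (simp add: algebra_simps)
  qed
  have "sg*r*(A-g) + r*g*(A-g) > 0" using sg r g by (simp add: add_pos_pos)
  hence "E > 0" using E2 g by (metis zero_less_mult_pos)
  hence "sq*(K*D) < sq*(sg+g)" unfolding E_def by (simp add: algebra_simps)
  hence "K*D < sg + g" using sq(2) by simp
  with \<open>0 < K*D\<close> show ?thesis by simp
qed

theorem proposition5:
  fixes b mu0 mu4' mu2' rho2 alpha2 :: real
  defines "mu2 \<equiv> rho2 + mu2'"
  defines "sigma2 \<equiv> (mu2 - mu0) / alpha2"
  defines "Khat \<equiv> b * sigma2 / (b - mu0)"
  defines "R \<equiv> R_G4 b mu0 mu4' rho2 alpha2 sigma2"
  assumes "b > 0" "mu0 > 0" "mu4' > 0" "mu2' > 0" "rho2 > 0" "alpha2 > 0"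
    and "b > mu0" "b > mu2" "b > mu4'" "mu0 < mu4'" "mu4' < mu2'"
  shows "R differentiable_on {Khat<..}
    \<and> (\<forall>K > Khat. 0 < K * deriv R K \<and> K * deriv R K < sigma2 + R K)"
proof -
  note as = assms
  define al where "al = (b-mu0)/b"
  define be where "be = (mu4'-mu0)/b"
  define r where "r = rho2/alpha2"
  define Af where "Af = (\<lambda>K. al*K - sigma2)"
  define cf where "cf = (\<lambda>K::real. be*K)"
  define qf where "qf = (\<lambda>K. Af K - cf K - r)"
  define sf where "sf = (\<lambda>K. sqrt (qf K ^2 + 4*r*Af K))"
  define gf where "gf = (\<lambda>K. (qf K + sf K)/2)"
  define Dv where "Dv = (\<lambda>K. ((al-be) + (2*qf K*(al-be) + 4*r*al) * (inverse (sf K)/2))/2)"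
  have sg: "sigma2 > 0" unfolding sigma2_def mu2_def using as by simp
  have al: "al > 0" unfolding al_def using as by simp
  have be: "be > 0" unfolding be_def using as by simp
  have albe: "al > be" unfolding al_def be_def using as by (simp add: divide_strict_right_mono)
  have r: "r > 0" unfolding r_def using as by simp
  have Khat: "Khat = sigma2/al" unfolding Khat_def al_def using as by (simp add: field_simps)
  have Khat0: "Khat > 0" unfolding Khat using sg al by simp
  have Apos: "Af K > 0" if "K > Khat" for K
    using that al unfolding Khat Af_def by (simp add: pos_divide_less_eq mult.commute)
  have cpos: "cf K > 0" if "K > Khat" for K using that Khat0 be unfolding cf_def by simp
  have G4: "G4_eq b mu0 mu4' rho2 alpha2 sigma2 K x = (Af K - x - cf K)*x + r*(Af K - x)" for K x
    unfolding G4_eq_def Sstar2_def Af_def cf_def al_def be_def r_def using as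
    by (simp add: field_simps)
  have SS: "Sstar2 b mu0 K - sigma2 = Af K" for K
    unfolding Sstar2_def Af_def al_def by simp
  have Q: "sf K > 0" "sf K ^2 = qf K^2 + 4*r*Af K" "0 < gf K" "gf K < Af K"
    "(Af K - gf K - cf K)*gf K + r*(Af K - gf K) = 0"
    "\<And>x. 0 < x \<Longrightarrow> (Af K - x - cf K)*x + r*(Af K - x) = 0 \<Longrightarrow> x = gf K"
    if "K > Khat" for K
    using quad_root[OF Apos[OF that] cpos[OF that] r] unfolding gf_def sf_def qf_def by blast+
  have RK: "R K = gf K" if "K > Khat" for K
    unfolding R_def R_G4_def SS G4
  proof (rule the_equality)
    show "0 < gf K \<and> gf K < Af K \<and> (Af K - gf K - cf K) * gf K + r * (Af K - gf K) = 0"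
      using Q(3,4,5)[OF that] by blast
    fix x assume "0 < x \<and> x < Af K \<and> (Af K - x - cf K) * x + r * (Af K - x) = 0"
    thus "x = gf K" using Q(6)[OF that] by blast
  qed
  have Dg: "(gf has_real_derivative Dv K) (at K)" if "K > Khat" for K
  proof -
    have "0 < sf K ^2" using Q(1)[OF that] by simp
    hence hp: "0 < qf K ^2 + 4*r*Af K" using Q(2)[OF that] by simp
    have hA: "(Af has_real_derivative al) (at K)" unfolding Af_def
      by (auto intro!: derivative_eq_intros)
    have hc: "(cf has_real_derivative be) (at K)" unfolding cf_def
      by (auto intro!: derivative_eq_intros)
    have hq: "(qf has_real_derivative (al-be)) (at K)" unfolding qf_def
      using hA hc by (auto intro!: derivative_eq_intros)
    have hh: "((\<lambda>K. qf K^2 + 4*r*Af K) has_real_derivative (2*qf K*(al-be) + 4*r*al)) (at K)"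
      using hq hA by (auto intro!: derivative_eq_intros)
    have hs: "(sf has_real_derivative (inverse (sqrt (qf K^2 + 4*r*Af K))/2) * (2*qf K*(al-be) + 4*r*al)) (at K)"
      unfolding sf_def by (rule DERIV_chain2[OF DERIV_real_sqrt[OF hp] hh])
    have hs': "(sf has_real_derivative (2*qf K*(al-be) + 4*r*al) * (inverse (sf K)/2)) (at K)"
      using hs unfolding sf_def by (simp add: mult.commute)
    have "((\<lambda>K. (qf K + sf K)/2) has_real_derivative ((al-be) + (2*qf K*(al-be) + 4*r*al) * (inverse (sf K)/2))/2) (at K)"
      by (intro DERIV_cdivide DERIV_add hq hs')
    thus ?thesis unfolding gf_def Dv_def .
  qed
  have DR: "(R has_real_derivative Dv K) (at K)" if "K > Khat" for K
    by (rule has_field_derivative_transform_within_open[OF Dg[OF that], of "{Khat<..}"])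
      (use that RK in auto)
  have part1: "R differentiable_on {Khat<..}"
    by (rule differentiable_at_imp_differentiable_on)
      (use DR in \<open>auto intro!: differentiableI has_field_derivative_imp_has_derivative\<close>)
  have part2: "0 < K * deriv R K \<and> K * deriv R K < sigma2 + R K" if "K > Khat" for K
  proof -
    have dd: "deriv R K = Dv K" using DR[OF that] by (rule DERIV_imp_deriv)
    have Ds: "sf K * Dv K = (al - be)*gf K + r*al"
      unfolding Dv_def gf_def using Q(1)[OF that] by (simp add: field_simps)
    have K0: "K > 0" using that Khat0 by simp
    show ?thesis unfolding dd RK[OF that]
    proof (rule key_ineq[OF Apos[OF that] cpos[OF that] r sg Q(3,4,5)[OF that] _ Q(1)[OF that] Ds])
      show "sf K = 2 * gf K - (Af K - cf K - r)" unfolding gf_def qf_def by (simp add: field_simps)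
      show "al * K = Af K + sigma2" unfolding Af_def by simp
      show "be * K = cf K" unfolding cf_def by simp
      show "Af K + sigma2 - cf K > 0" unfolding Af_def cf_def
        using albe K0 by (simp add: algebra_simps)
    qed
  qed
  show ?thesis using part1 part2 by auto
qed

end
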